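(* Let $e$ be a curve and $\delta>0$. Then each of the offsets $e_{-\delta}$ and $e_{+\delta}$ is monotone, i.e. meets every vertical line and every horizontal line in a connected set.
   Context: A curve is an open, bounded, piecewise-algebraic arc in $\mathbb{R}^2$ that is both $x$-monotone and $y$-monotone. For a point $a$ and a set $s$, $a<_y s$ means that $a$ and $s$ overlap in $x$ (some $q\in s$ has $q_x=a_x$) and $a_y<q_y$ for every $q\in s$ with $q_x=a_x$; $a>_y s$ is defined symmetrically. ${\rm dist}(a,e)=\inf_{q\in e}|a-q|$. The $\delta$-offsets of $e$ are $e_{-\delta}=\{a: a<_y e,\ {\rm dist}(a,e)=\delta\}$ and $e_{+\delta}=\{a: a>_y e,\ {\rm dist}(a,e)=\delta\}$. *)

theory Defs
  imports "HOL-Analysis.Analysis"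
begin

type_synonym pt = "real \<times> real"

definition bipoly_eval :: "nat \<Rightarrow> (nat \<Rightarrow> nat \<Rightarrow> real) \<Rightarrow> pt \<Rightarrow> real" where
  "bipoly_eval N c p = (\<Sum>i\<le>N. \<Sum>j\<le>N. c i j * fst p ^ i * snd p ^ j)"

definition in_algebraic_curve :: "pt set \<Rightarrow> bool" where
  "in_algebraic_curve S \<longleftrightarrow>
     (\<exists>N c. (\<exists>i\<le>N. \<exists>j\<le>N. c i j \<noteq> 0) \<and> (\<forall>p\<in>S. bipoly_eval N c p = 0))"

definition pw_algebraic_open_arc :: "pt set \<Rightarrow> bool" where
  "pw_algebraic_open_arc e \<longleftrightarrow>
     (\<exists>\<gamma> :: real \<Rightarrow> pt. continuous_on {0<..<1} \<gamma> \<and> inj_on \<gamma> {0<..<1} \<and>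
        e = \<gamma> ` {0<..<1} \<and>
        (\<exists>k t. t 0 = (0::real) \<and> t k = 1 \<and> (\<forall>i<k. t i < t (Suc i)) \<and>
           (\<forall>i<k. in_algebraic_curve (\<gamma> ` ({t i..t (Suc i)} \<inter> {0<..<1})))))"

definition x_monotone :: "pt set \<Rightarrow> bool" where
  "x_monotone S \<longleftrightarrow> (\<forall>c. connected (S \<inter> {p. fst p = c}))"

definition y_monotone :: "pt set \<Rightarrow> bool" where
  "y_monotone S \<longleftrightarrow> (\<forall>c. connected (S \<inter> {p. snd p = c}))"

definition monotone_set :: "pt set \<Rightarrow> bool" where
  "monotone_set S \<longleftrightarrow> x_monotone S \<and> y_monotone S"

definition is_curve :: "pt set \<Rightarrow> bool" where
  "is_curve e \<longleftrightarrow> pw_algebraic_open_arc e \<and> bounded e \<and> x_monotone e \<and> y_monotone e"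

definition below_y :: "pt \<Rightarrow> pt set \<Rightarrow> bool" where
  "below_y a s \<longleftrightarrow> (\<exists>q\<in>s. fst q = fst a) \<and> (\<forall>q\<in>s. fst q = fst a \<longrightarrow> snd a < snd q)"

definition above_y :: "pt \<Rightarrow> pt set \<Rightarrow> bool" where
  "above_y a s \<longleftrightarrow> (\<exists>q\<in>s. fst q = fst a) \<and> (\<forall>q\<in>s. fst q = fst a \<longrightarrow> snd a > snd q)"

definition offset_minus :: "pt set \<Rightarrow> real \<Rightarrow> pt set" where
  "offset_minus e \<delta> = {a. below_y a e \<and> infdist a e = \<delta>}"

definition offset_plus :: "pt set \<Rightarrow> real \<Rightarrow> pt set" where
  "offset_plus e \<delta> = {a. above_y a e \<and> infdist a e = \<delta>}"

end

theory Submission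
  imports Defs
begin


lemma bipoly_fst: "bipoly_eval N c (a,y) = (\<Sum>j\<le>N. (\<Sum>i\<le>N. c i j * a^i) * y^j)"
proof -
  have "(\<Sum>j\<le>N. (\<Sum>i\<le>N. c i j * a^i) * y^j) = (\<Sum>j\<le>N. \<Sum>i\<le>N. c i j * a^i * y^j)"
    by (simp add: sum_distrib_right)
  also have "\<dots> = (\<Sum>i\<le>N. \<Sum>j\<le>N. c i j * a^i * y^j)" by (rule sum.swap)
  finally show ?thesis by (simp add: bipoly_eval_def)
qed

lemma bipoly_snd: "bipoly_eval N c (x,b) = (\<Sum>i\<le>N. (\<Sum>j\<le>N. c i j * b^j) * x^i)"
  unfolding bipoly_eval_def by (simp add: sum_distrib_right sum_distrib_left mult_ac)

lemma fib_fst: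
  assumes "\<exists>i\<le>N. \<exists>j\<le>N. c i j \<noteq> 0"
  shows "finite {a. infinite {p. bipoly_eval N c p = 0 \<and> fst p = a}}"
proof -
  obtain i0 j0 where ij: "i0 \<le> N" "j0 \<le> N" "c i0 j0 \<noteq> 0" using assms by auto
  have fin: "finite {a. (\<Sum>i\<le>N. c i j0 * a^i) = 0}"
    using polyfun_finite_roots[of "\<lambda>i. c i j0" N] ij by auto
  have "{a. infinite {p. bipoly_eval N c p = 0 \<and> fst p = a}} \<subseteq> {a. (\<Sum>i\<le>N. c i j0 * a^i) = 0}"
  proof
    fix a assume "a \<in> {a. infinite {p. bipoly_eval N c p = 0 \<and> fst p = a}}"
    then have inf: "infinite {p. bipoly_eval N c p = 0 \<and> fst p = a}" by simp
    have E: "{p. bipoly_eval N c p = 0 \<and> fst p = a} = Pair a ` {y. (\<Sum>j\<le>N. (\<Sum>i\<le>N. c i j * a^i) * y^j) = 0}"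
    proof (intro set_eqI iffI)
      fix p assume p: "p \<in> {p. bipoly_eval N c p = 0 \<and> fst p = a}"
      then have "p = (a, snd p)" by (simp add: prod_eq_iff)
      note pe = this
      have "bipoly_eval N c (a, snd p) = 0" using p pe by (metis (mono_tags) mem_Collect_eq)
      then have q: "(\<Sum>j\<le>N. (\<Sum>i\<le>N. c i j * a^i) * (snd p)^j) = 0" by (simp add: bipoly_fst)
      show "p \<in> Pair a ` {y. (\<Sum>j\<le>N. (\<Sum>i\<le>N. c i j * a^i) * y^j) = 0}"
        by (rule image_eqI[where f="Pair a" and x="snd p", OF pe]) (simp add: q)
    next
      fix p assume "p \<in> Pair a ` {y. (\<Sum>j\<le>N. (\<Sum>i\<le>N. c i j * a^i) * y^j) = 0}"
      then obtain y where "p = (a,y)" "(\<Sum>j\<le>N. (\<Sum>i\<le>N. c i j * a^i) * y^j) = 0" by auto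
      then show "p \<in> {p. bipoly_eval N c p = 0 \<and> fst p = a}" by (simp add: bipoly_fst)
    qed
    then have "infinite {y. (\<Sum>j\<le>N. (\<Sum>i\<le>N. c i j * a^i) * y^j) = 0}"
      using inf unfolding E using finite_imageI by blast
    then have "\<not> (\<exists>j\<le>N. (\<Sum>i\<le>N. c i j * a^i) \<noteq> 0)"
      using polyfun_finite_roots[of "\<lambda>j. \<Sum>i\<le>N. c i j * a^i" N] by blast
    then show "a \<in> {a. (\<Sum>i\<le>N. c i j0 * a^i) = 0}" using ij by auto
  qed
  then show ?thesis using fin finite_subset by blast
qed

lemma fib_snd:
  assumes "\<exists>i\<le>N. \<exists>j\<le>N. c i j \<noteq> 0"
  shows "finite {a. infinite {p. bipoly_eval N c p = 0 \<and> snd p = a}}"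
proof -
  obtain i0 j0 where ij: "i0 \<le> N" "j0 \<le> N" "c i0 j0 \<noteq> 0" using assms by auto
  have fin: "finite {b. (\<Sum>j\<le>N. c i0 j * b^j) = 0}"
    using polyfun_finite_roots[of "\<lambda>j. c i0 j" N] ij by auto
  have "{a. infinite {p. bipoly_eval N c p = 0 \<and> snd p = a}} \<subseteq> {b. (\<Sum>j\<le>N. c i0 j * b^j) = 0}"
  proof
    fix b assume "b \<in> {a. infinite {p. bipoly_eval N c p = 0 \<and> snd p = a}}"
    then have inf: "infinite {p. bipoly_eval N c p = 0 \<and> snd p = b}" by simp
    have E: "{p. bipoly_eval N c p = 0 \<and> snd p = b} = (\<lambda>x. (x,b)) ` {x. (\<Sum>i\<le>N. (\<Sum>j\<le>N. c i j * b^j) * x^i) = 0}"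
    proof (intro set_eqI iffI)
      fix p assume p: "p \<in> {p. bipoly_eval N c p = 0 \<and> snd p = b}"
      then have "p = (fst p, b)" by (simp add: prod_eq_iff)
      note pe = this
      have "bipoly_eval N c (fst p, b) = 0" using p pe by (metis (mono_tags) mem_Collect_eq)
      then have q: "(\<Sum>i\<le>N. (\<Sum>j\<le>N. c i j * b^j) * (fst p)^i) = 0" by (simp add: bipoly_snd)
      show "p \<in> (\<lambda>x. (x,b)) ` {x. (\<Sum>i\<le>N. (\<Sum>j\<le>N. c i j * b^j) * x^i) = 0}"
        by (rule image_eqI[where f="\<lambda>x. (x,b)" and x="fst p", OF pe]) (simp add: q)
    next
      fix p assume "p \<in> (\<lambda>x. (x,b)) ` {x. (\<Sum>i\<le>N. (\<Sum>j\<le>N. c i j * b^j) * x^i) = 0}"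
      then obtain x where "p = (x,b)" "(\<Sum>i\<le>N. (\<Sum>j\<le>N. c i j * b^j) * x^i) = 0" by auto
      then show "p \<in> {p. bipoly_eval N c p = 0 \<and> snd p = b}" by (simp add: bipoly_snd)
    qed
    then have "infinite {x. (\<Sum>i\<le>N. (\<Sum>j\<le>N. c i j * b^j) * x^i) = 0}"
      using inf unfolding E using finite_imageI by blast
    then have "\<not> (\<exists>i\<le>N. (\<Sum>j\<le>N. c i j * b^j) \<noteq> 0)"
      using polyfun_finite_roots[of "\<lambda>i. \<Sum>j\<le>N. c i j * b^j" N] by blast
    then show "b \<in> {b. (\<Sum>j\<le>N. c i0 j * b^j) = 0}" using ij by auto
  qed
  then show ?thesis using fin finite_subset by blast
qed

lemma cover:
  fixes t :: "nat \<Rightarrow> real"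
  assumes "t 0 = 0" "t k = 1" "\<forall>i<k. t i < t (Suc i)" "0 < s" "s < 1"
  shows "\<exists>i<k. t i \<le> s \<and> s \<le> t (Suc i)"
proof -
  have "\<forall>n. n \<le> k \<longrightarrow> 0 < n \<longrightarrow> s \<le> t n \<longrightarrow> (\<exists>i<n. t i \<le> s \<and> s \<le> t (Suc i))"
  proof
    fix n show "n \<le> k \<longrightarrow> 0 < n \<longrightarrow> s \<le> t n \<longrightarrow> (\<exists>i<n. t i \<le> s \<and> s \<le> t (Suc i))"
    proof (induction n)
      case 0 then show ?case by simp
    next
      case (Suc n)
      show ?case
      proof (intro impI)
        assume a: "Suc n \<le> k" "0 < Suc n" "s \<le> t (Suc n)"
        show "\<exists>i<Suc n. t i \<le> s \<and> s \<le> t (Suc i)"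
        proof (cases "n = 0")
          case True then show ?thesis using a assms by auto
        next
          case False
          show ?thesis
          proof (cases "s \<le> t n")
            case True then show ?thesis using Suc.IH a False by (metis less_SucI Suc_leD not_gr0)
          next
            case F: False then show ?thesis using a by (intro exI[of _ n]) auto
          qed
        qed
      qed
    qed
  qed
  moreover have "0 < k" using assms by (metis gr0I zero_neq_one)
  ultimately show ?thesis using assms by auto
qed

lemma arc_fib:
  fixes g :: "pt \<Rightarrow> real"
  assumes e: "e = \<gamma> ` {0<..<1}" and t: "t 0 = (0::real)" "t k = 1" "\<forall>i<k. t i < t (Suc i)"
    and alg: "\<forall>i<k. in_algebraic_curve (\<gamma> ` ({t i..t (Suc i)} \<inter> {0<..<1}))"
    and pf: "\<And>N c. (\<exists>i\<le>N. \<exists>j\<le>N. c i j \<noteq> 0) \<Longrightarrow> finite {a. infinite {p. bipoly_eval N c p = 0 \<and> g p = a}}"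
  shows "finite {a. infinite (e \<inter> {p. g p = a})}"
proof -
  define Z where "Z i = \<gamma> ` ({t i..t (Suc i)} \<inter> {0<..<1})" for i
  have "\<forall>i<k. \<exists>N c. (\<exists>i\<le>N. \<exists>j\<le>N. c i j \<noteq> 0) \<and> (\<forall>p\<in>Z i. bipoly_eval N c p = 0)"
    using alg unfolding in_algebraic_curve_def Z_def by blast
  then obtain NN CC where NC: "\<forall>i<k. (\<exists>a\<le>NN i. \<exists>j\<le>NN i. CC i a j \<noteq> 0) \<and> (\<forall>p\<in>Z i. bipoly_eval (NN i) (CC i) p = 0)"
    by metis
  have cov: "e \<subseteq> (\<Union>i<k. Z i)"
  proof
    fix p assume "p \<in> e"
    then obtain s where s: "0 < s" "s < 1" "p = \<gamma> s" using e by auto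
    then obtain i where "i < k" "t i \<le> s" "s \<le> t (Suc i)" using cover[OF t s(1,2)] by auto
    moreover have "s \<in> {t i..t (Suc i)} \<inter> {0<..<1}" using s calculation by auto
    ultimately have "i < k" "p \<in> Z i" using s unfolding Z_def by auto
    then show "p \<in> (\<Union>i<k. Z i)" by blast
  qed
  have "{a. infinite (e \<inter> {p. g p = a})} \<subseteq> (\<Union>i<k. {a. infinite {p. bipoly_eval (NN i) (CC i) p = 0 \<and> g p = a}})"
  proof
    fix a assume "a \<in> {a. infinite (e \<inter> {p. g p = a})}"
    then have inf: "infinite (e \<inter> {p. g p = a})" by simp
    have "e \<inter> {p. g p = a} \<subseteq> (\<Union>i<k. Z i \<inter> {p. g p = a})" using cov by auto
    then have "\<exists>i<k. infinite (Z i \<inter> {p. g p = a})" using inf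
      by (meson finite_UN_I finite_lessThan finite_subset lessThan_iff)
    then obtain i where i: "i < k" "infinite (Z i \<inter> {p. g p = a})" by auto
    have "Z i \<inter> {p. g p = a} \<subseteq> {p. bipoly_eval (NN i) (CC i) p = 0 \<and> g p = a}" using NC i by auto
    then have "infinite {p. bipoly_eval (NN i) (CC i) p = 0 \<and> g p = a}" using i finite_subset by blast
    then show "a \<in> (\<Union>i<k. {a. infinite {p. bipoly_eval (NN i) (CC i) p = 0 \<and> g p = a}})" using i by auto
  qed
  moreover have "finite (\<Union>i<k. {a. infinite {p. bipoly_eval (NN i) (CC i) p = 0 \<and> g p = a}})"
    using NC pf by auto
  ultimately show ?thesis using finite_subset by blast
qed

lemma betw_mono:
  fixes f :: "real \<Rightarrow> real"
  assumes H: "\<And>s1 s2 s3. 0 < s1 \<Longrightarrow> s1 < s2 \<Longrightarrow> s2 < s3 \<Longrightarrow> s3 < 1 \<Longrightarrow>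
     min (f s1) (f s3) \<le> f s2 \<and> f s2 \<le> max (f s1) (f s3)"
  shows "(\<forall>u v. 0<u \<and> u \<le> v \<and> v < 1 \<longrightarrow> f u \<le> f v) \<or> (\<forall>u v. 0<u \<and> u \<le> v \<and> v < 1 \<longrightarrow> f v \<le> f u)"
proof (rule ccontr)
  assume "\<not> ?thesis"
  then obtain u v a b where uv: "0<u" "u \<le> v" "v<1" "f u > f v" and ab: "0<a" "a \<le> b" "b<1" "f a < f b"
    by (meson not_le)
  have uv': "u < v" using uv by (metis order_less_irrefl order_le_less)
  have ab': "a < b" using ab by (metis order_less_irrefl order_le_less)
  note hh = H[of u v a] H[of u v b] H[of u a v] H[of u a b] H[of u b v] H[of u b a] H[of v u a] H[of v u b] H[of v a u] H[of v a b] H[of v b u] H[of v b a] H[of a u v] H[of a u b] H[of a v u] H[of a v b] H[of a b u] H[of a b v] H[of b u v] H[of b u a] H[of b v u] H[of b v a] H[of b a u] H[of b a v]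
  show False using uv uv' ab ab' hh by (smt (verit))
qed



definition inc_chain :: "pt set \<Rightarrow> bool" where
  "inc_chain e \<longleftrightarrow> (\<forall>p\<in>e. \<forall>q\<in>e. (fst p \<le> fst q \<and> snd p \<le> snd q) \<or> (fst q \<le> fst p \<and> snd q \<le> snd p))"

lemma dist_comp_le:
  fixes a b c d :: pt
  assumes "\<bar>fst a - fst b\<bar> \<le> \<bar>fst c - fst d\<bar>" "\<bar>snd a - snd b\<bar> \<le> \<bar>snd c - snd d\<bar>"
  shows "dist a b \<le> dist c d"
  unfolding dist_prod_def dist_real_def
  by (intro real_sqrt_le_mono add_mono power_mono) (use assms in auto)

lemma interval_image:
  assumes "connected e" "p \<in> e" "q \<in> e" "g p \<le> h" "h \<le> g q" "continuous_on e (g :: pt \<Rightarrow> real)"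
  shows "\<exists>r\<in>e. g r = h"
proof -
  have "connected (g ` e)" using assms connected_continuous_image by blast
  then have "is_interval (g ` e)" using is_interval_connected_1 by blast
  then have "h \<in> g ` e" using assms unfolding is_interval_1 by blast
  then show ?thesis by auto
qed

lemma between_y:
  assumes "inc_chain e" "connected e" "q \<in> e" "p \<in> e" "snd q \<le> h" "h \<le> snd p" "fst q \<le> fst p"
  shows "\<exists>r\<in>e. snd r = h \<and> fst q \<le> fst r \<and> fst r \<le> fst p"
proof -
  obtain r0 where r0: "r0 \<in> e" "snd r0 = h"
    proof -
    have "continuous_on e (\<lambda>x. snd x)" by (intro continuous_intros)
    then show ?thesis using interval_image[of e q p snd h] assms(2-6) that by auto
  qed
  show ?thesis
  proof -
    have c1: "(fst r0 \<le> fst q \<and> snd r0 \<le> snd q) \<or> (fst q \<le> fst r0 \<and> snd q \<le> snd r0)"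
      using assms(1) r0(1) assms(3) unfolding inc_chain_def by blast
    have c2: "(fst r0 \<le> fst p \<and> snd r0 \<le> snd p) \<or> (fst p \<le> fst r0 \<and> snd p \<le> snd r0)"
      using assms(1) r0(1) assms(4) unfolding inc_chain_def by blast
    show ?thesis
    proof (cases "snd r0 \<le> snd q \<and> \<not> (fst q \<le> fst r0)")
      case True
      then have "snd q = h" using r0 assms(5) by linarith
      then show ?thesis using assms(3,7) by blast
    next
      case F1: False
      then have A: "fst q \<le> fst r0" using c1 by linarith
      show ?thesis
      proof (cases "fst r0 \<le> fst p")
        case True then show ?thesis using A r0 by blast
      next
        case False
        then have "snd p = h" using c2 r0 assms(6) by linarith
        then show ?thesis using assms(4,7) by blast
      qed
    qed
  qed
qed

lemma between_x:
  assumes "inc_chain e" "connected e" "q \<in> e" "p \<in> e" "fst q \<le> h" "h \<le> fst p" "snd q \<le> snd p"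
  shows "\<exists>r\<in>e. fst r = h \<and> snd q \<le> snd r \<and> snd r \<le> snd p"
proof -
  obtain r0 where r0: "r0 \<in> e" "fst r0 = h"
    proof -
    have "continuous_on e (\<lambda>x. fst x)" by (intro continuous_intros)
    then show ?thesis using interval_image[of e q p fst h] assms(2-6) that by auto
  qed
  show ?thesis
  proof -
    have c1: "(snd r0 \<le> snd q \<and> fst r0 \<le> fst q) \<or> (snd q \<le> snd r0 \<and> fst q \<le> fst r0)"
      using assms(1) r0(1) assms(3) unfolding inc_chain_def by blast
    have c2: "(snd r0 \<le> snd p \<and> fst r0 \<le> fst p) \<or> (snd p \<le> snd r0 \<and> fst p \<le> fst r0)"
      using assms(1) r0(1) assms(4) unfolding inc_chain_def by blast
    show ?thesis
    proof (cases "fst r0 \<le> fst q \<and> \<not> (snd q \<le> snd r0)")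
      case True
      then have "fst q = h" using r0 assms(5) by linarith
      then show ?thesis using assms(3,7) by blast
    next
      case F1: False
      then have A: "snd q \<le> snd r0" using c1 by linarith
      show ?thesis
      proof (cases "snd r0 \<le> snd p")
        case True then show ?thesis using A r0 by blast
      next
        case False
        then have "fst p = h" using c2 r0 assms(6) by linarith
        then show ?thesis using assms(4,7) by blast
      qed
    qed
  qed
qed

lemma infdist_geI:
  assumes "e \<noteq> {}" "\<And>q. q \<in> e \<Longrightarrow> k \<le> dist a q"
  shows "k \<le> infdist a e"
  using assms by (simp add: infdist_notempty cINF_greatest)

lemma vmono:
  assumes ch: "inc_chain e" and con: "connected e" and yy: "y' \<le> y" and bl: "below_y (c,y) e"
  shows "infdist (c,y) e \<le> infdist (c,y') e"
proof -
  obtain p where p: "p \<in> e" "fst p = c" using bl unfolding below_y_def by auto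
  have pab: "snd p > y" using bl p unfolding below_y_def by auto
  have ne: "e \<noteq> {}" using p by auto
  show ?thesis
  proof (rule infdist_geI[OF ne])
    fix q assume q: "q \<in> e"
    show "infdist (c, y) e \<le> dist (c, y') q"
    proof (cases "snd q \<ge> y")
      case True
      have "dist (c,y) q \<le> dist (c,y') q" using True yy by (intro dist_comp_le) auto
      then show ?thesis using infdist_le[OF q, of "(c,y)"] by linarith
    next
      case False
      define h where "h = snd q + (y - y')"
      show ?thesis
      proof (cases "snd p \<le> h")
        case True
        have "dist (c,y) p \<le> dist (c,y') q" using True False yy pab p unfolding h_def
          by (intro dist_comp_le) auto
        then show ?thesis using infdist_le[OF p(1), of "(c,y)"] by linarith
      next
        case hp: False
        have "(fst q \<le> fst p \<and> snd q \<le> snd p) \<or> (fst p \<le> fst q \<and> snd p \<le> snd q)"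
          using ch q p(1) unfolding inc_chain_def by blast
        then have qp: "fst q \<le> fst p" using False pab by linarith
        obtain r where r: "r \<in> e" "snd r = h" "fst q \<le> fst r" "fst r \<le> fst p"
          using between_y[OF ch con q p(1), of h] hp yy qp False unfolding h_def by auto
        have "dist (c,y) r \<le> dist (c,y') q" using r p False yy unfolding h_def
          by (intro dist_comp_le) auto
        then show ?thesis using infdist_le[OF r(1), of "(c,y)"] by linarith
      qed
    qed
  qed
qed

lemma hmono:
  assumes ch: "inc_chain e" and con: "connected e" and xx: "x \<le> x'" and bl: "below_y (x,c) e"
  shows "infdist (x,c) e \<le> infdist (x',c) e"
proof -
  obtain p where p: "p \<in> e" "fst p = x" using bl unfolding below_y_def by auto
  have pab: "snd p > c" using bl p unfolding below_y_def by auto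
  have ne: "e \<noteq> {}" using p by auto
  show ?thesis
  proof (rule infdist_geI[OF ne])
    fix q assume q: "q \<in> e"
    show "infdist (x, c) e \<le> dist (x', c) q"
    proof (cases "fst q \<le> x")
      case True
      have "dist (x,c) q \<le> dist (x',c) q" using True xx by (intro dist_comp_le) auto
      then show ?thesis using infdist_le[OF q, of "(x,c)"] by linarith
    next
      case False
      have "(fst q \<le> fst p \<and> snd q \<le> snd p) \<or> (fst p \<le> fst q \<and> snd p \<le> snd q)"
        using ch q p(1) unfolding inc_chain_def by blast
      then have pq: "snd p \<le> snd q" using False p(2) by linarith
      define k where "k = fst q - (x' - x)"
      show ?thesis
      proof (cases "k \<le> x")
        case True
        have "dist (x,c) p \<le> dist (x',c) q" using True False xx pab p pq unfolding k_def
          by (intro dist_comp_le) auto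
        then show ?thesis using infdist_le[OF p(1), of "(x,c)"] by linarith
      next
        case kp: False
        obtain r where r: "r \<in> e" "fst r = k" "snd p \<le> snd r" "snd r \<le> snd q"
          using between_x[OF ch con p(1) q, of k] kp xx p pq unfolding k_def by auto
        have "dist (x,c) r \<le> dist (x',c) q" using r p False xx pab unfolding k_def
          by (intro dist_comp_le) auto
        then show ?thesis using infdist_le[OF r(1), of "(x,c)"] by linarith
      qed
    qed
  qed
qed



lemma core:
  assumes ch: "inc_chain e" and con: "connected e"
  shows "monotone_set (offset_minus e \<delta>)"
  unfolding monotone_set_def x_monotone_def y_monotone_def
proof (intro conjI allI)
  fix c
  define T where "T = {y. (c,y) \<in> offset_minus e \<delta>}"
  have eq: "offset_minus e \<delta> \<inter> {p. fst p = c} = (\<lambda>y. (c,y)) ` T"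
    unfolding T_def by force
  have "is_interval T" unfolding is_interval_1
  proof (intro ballI allI impI)
    fix y1 y2 y assume y1: "y1 \<in> T" and y2: "y2 \<in> T" and yy: "y1 \<le> y \<and> y \<le> y2"
    have b1: "below_y (c,y1) e" "infdist (c,y1) e = \<delta>" using y1 unfolding T_def offset_minus_def by auto
    have b2: "below_y (c,y2) e" "infdist (c,y2) e = \<delta>" using y2 unfolding T_def offset_minus_def by auto
    have b: "below_y (c,y) e" using b2(1) yy unfolding below_y_def by force
    have "infdist (c,y) e \<le> infdist (c,y1) e" using vmono[OF ch con _ b] yy by auto
    moreover have "infdist (c,y2) e \<le> infdist (c,y) e" using vmono[OF ch con _ b2(1)] yy by auto
    ultimately have "infdist (c,y) e = \<delta>" using b1 b2 by linarith
    then show "y \<in> T" using b unfolding T_def offset_minus_def by auto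
  qed
  then have "connected T" by (simp add: is_interval_connected_1)
  moreover have "continuous_on T (\<lambda>y. (c,y))" by (intro continuous_intros)
  ultimately show "connected (offset_minus e \<delta> \<inter> {p. fst p = c})"
    unfolding eq using connected_continuous_image by blast
next
  fix c
  define T where "T = {x. (x,c) \<in> offset_minus e \<delta>}"
  have eq: "offset_minus e \<delta> \<inter> {p. snd p = c} = (\<lambda>x. (x,c)) ` T"
    unfolding T_def by force
  have "is_interval T" unfolding is_interval_1
  proof (intro ballI allI impI)
    fix x1 x2 x assume x1: "x1 \<in> T" and x2: "x2 \<in> T" and xx: "x1 \<le> x \<and> x \<le> x2"
    have b1: "below_y (x1,c) e" "infdist (x1,c) e = \<delta>" using x1 unfolding T_def offset_minus_def by auto
    have b2: "below_y (x2,c) e" "infdist (x2,c) e = \<delta>" using x2 unfolding T_def offset_minus_def by auto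
    obtain p1 where p1: "p1 \<in> e" "fst p1 = x1" using b1(1) unfolding below_y_def by auto
    obtain p2 where p2: "p2 \<in> e" "fst p2 = x2" using b2(1) unfolding below_y_def by auto
    have p1c: "c < snd p1" using b1(1) p1 unfolding below_y_def by auto
    have "continuous_on e (\<lambda>x. fst x)" by (intro continuous_intros)
    then obtain q where q: "q \<in> e" "fst q = x"
      using interval_image[of e p1 p2 fst x] con p1 p2 xx by auto
    have all: "\<forall>r\<in>e. fst r = x \<longrightarrow> c < snd r"
    proof (intro ballI impI)
      fix r assume r: "r \<in> e" "fst r = x"
      show "c < snd r"
      proof (cases "x1 = x")
        case True then show ?thesis using b1(1) r unfolding below_y_def by auto
      next
        case False
        have "(fst p1 \<le> fst r \<and> snd p1 \<le> snd r) \<or> (fst r \<le> fst p1 \<and> snd r \<le> snd p1)"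
          using ch p1(1) r(1) unfolding inc_chain_def by blast
        then show ?thesis using False xx p1 r p1c by auto
      qed
    qed
    have b: "below_y (x,c) e" using q all unfolding below_y_def by auto
    have "infdist (x1,c) e \<le> infdist (x,c) e" using hmono[OF ch con _ b1(1)] xx by auto
    moreover have "infdist (x,c) e \<le> infdist (x2,c) e" using hmono[OF ch con _ b] xx by auto
    ultimately have "infdist (x,c) e = \<delta>" using b1 b2 by linarith
    then show "x \<in> T" using b unfolding T_def offset_minus_def by auto
  qed
  then have "connected T" by (simp add: is_interval_connected_1)
  moreover have "continuous_on T (\<lambda>x. (x,c))" by (intro continuous_intros)
  ultimately show "connected (offset_minus e \<delta> \<inter> {p. snd p = c})"
    unfolding eq using connected_continuous_image by blast
qed

definition dec_chain :: "pt set \<Rightarrow> bool" where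
  "dec_chain e \<longleftrightarrow> (\<forall>p\<in>e. \<forall>q\<in>e. (fst p \<le> fst q \<and> snd q \<le> snd p) \<or> (fst q \<le> fst p \<and> snd p \<le> snd q))"

definition Qm :: "pt \<Rightarrow> pt" where "Qm p = (- fst p, snd p)"
definition Rm :: "pt \<Rightarrow> pt" where "Rm p = (fst p, - snd p)"

lemma Qm_Qm[simp]: "Qm (Qm p) = p" by (simp add: Qm_def)
lemma Rm_Rm[simp]: "Rm (Rm p) = p" by (simp add: Rm_def)
lemma Qm_cont: "continuous_on A Qm" unfolding Qm_def by (intro continuous_intros)
lemma Rm_cont: "continuous_on A Rm" unfolding Rm_def by (intro continuous_intros)

lemma infdist_iso:
  assumes "\<And>x y. dist (T x) (T y) = dist x y"
  shows "infdist (T a) (T ` e) = infdist a e"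
  unfolding infdist_def using assms by (simp add: image_image)

lemma Qm_dist: "dist (Qm x) (Qm y) = dist x y"
  unfolding Qm_def dist_prod_def dist_real_def by (simp add: abs_minus_commute)

lemma Rm_dist: "dist (Rm x) (Rm y) = dist x y"
  unfolding Rm_def dist_prod_def dist_real_def by (simp add: abs_minus_commute)

lemma Qm_inc: "dec_chain e \<Longrightarrow> inc_chain (Qm ` e)"
  unfolding dec_chain_def inc_chain_def Qm_def by auto

lemma Rm_inc: "dec_chain e \<Longrightarrow> inc_chain (Rm ` e)"
  unfolding dec_chain_def inc_chain_def Rm_def by auto

lemma Rm_dec: "inc_chain e \<Longrightarrow> dec_chain (Rm ` e)"
  unfolding dec_chain_def inc_chain_def Rm_def by auto

lemma Qm_below: "below_y (Qm a) (Qm ` e) \<longleftrightarrow> below_y a e"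
  unfolding below_y_def Qm_def by auto

lemma Rm_below: "below_y (Rm a) (Rm ` e) \<longleftrightarrow> above_y a e"
  unfolding below_y_def above_y_def Rm_def by auto

lemma Qm_offset: "offset_minus e \<delta> = Qm ` offset_minus (Qm ` e) \<delta>"
proof -
  have "a \<in> offset_minus (Qm ` e) \<delta> \<longleftrightarrow> Qm a \<in> offset_minus e \<delta>" for a
    using Qm_below[of "Qm a" e] infdist_iso[of Qm, OF Qm_dist, of "Qm a" e]
    unfolding offset_minus_def by simp
  note H = this
  show ?thesis
  proof (rule set_eqI, rule iffI)
    fix x assume "x \<in> offset_minus e \<delta>"
    then have "Qm x \<in> offset_minus (Qm ` e) \<delta>" using H[of "Qm x"] by simp
    then show "x \<in> Qm ` offset_minus (Qm ` e) \<delta>" using image_eqI[of x Qm "Qm x"] by simp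
  next
    fix x assume "x \<in> Qm ` offset_minus (Qm ` e) \<delta>"
    then obtain a where "x = Qm a" "a \<in> offset_minus (Qm ` e) \<delta>" by auto
    then show "x \<in> offset_minus e \<delta>" using H by simp
  qed
qed

lemma Rm_offset: "offset_plus e \<delta> = Rm ` offset_minus (Rm ` e) \<delta>"
proof -
  have "a \<in> offset_minus (Rm ` e) \<delta> \<longleftrightarrow> Rm a \<in> offset_plus e \<delta>" for a
    using Rm_below[of "Rm a" e] infdist_iso[of Rm, OF Rm_dist, of "Rm a" e]
    unfolding offset_minus_def offset_plus_def by simp
  note H = this
  show ?thesis
  proof (rule set_eqI, rule iffI)
    fix x assume "x \<in> offset_plus e \<delta>"
    then have "Rm x \<in> offset_minus (Rm ` e) \<delta>" using H[of "Rm x"] by simp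
    then show "x \<in> Rm ` offset_minus (Rm ` e) \<delta>" using image_eqI[of x Rm "Rm x"] by simp
  next
    fix x assume "x \<in> Rm ` offset_minus (Rm ` e) \<delta>"
    then obtain a where "x = Rm a" "a \<in> offset_minus (Rm ` e) \<delta>" by auto
    then show "x \<in> offset_plus e \<delta>" using H by simp
  qed
qed

lemma Qm_mono: "monotone_set S \<Longrightarrow> monotone_set (Qm ` S)"
  unfolding monotone_set_def x_monotone_def y_monotone_def
proof (intro conjI allI; elim conjE)
  fix c assume X: "\<forall>c. connected (S \<inter> {p. fst p = c})" and Y: "\<forall>c. connected (S \<inter> {p. snd p = c})"
  have "Qm ` S \<inter> {p. fst p = c} = Qm ` (S \<inter> {p. fst p = - c})" unfolding Qm_def by force
  then show "connected (Qm ` S \<inter> {p. fst p = c})"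
    using connected_continuous_image[OF Qm_cont X[rule_format, of "-c"]] by simp
  have "Qm ` S \<inter> {p. snd p = c} = Qm ` (S \<inter> {p. snd p = c})" unfolding Qm_def by force
  then show "connected (Qm ` S \<inter> {p. snd p = c})"
    using connected_continuous_image[OF Qm_cont Y[rule_format, of "c"]] by simp
qed

lemma Rm_mono: "monotone_set S \<Longrightarrow> monotone_set (Rm ` S)"
  unfolding monotone_set_def x_monotone_def y_monotone_def
proof (intro conjI allI; elim conjE)
  fix c assume X: "\<forall>c. connected (S \<inter> {p. fst p = c})" and Y: "\<forall>c. connected (S \<inter> {p. snd p = c})"
  have "Rm ` S \<inter> {p. fst p = c} = Rm ` (S \<inter> {p. fst p = c})" unfolding Rm_def by force
  then show "connected (Rm ` S \<inter> {p. fst p = c})"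
    using connected_continuous_image[OF Rm_cont X[rule_format, of "c"]] by simp
  have "Rm ` S \<inter> {p. snd p = c} = Rm ` (S \<inter> {p. snd p = - c})" unfolding Rm_def by force
  then show "connected (Rm ` S \<inter> {p. snd p = c})"
    using connected_continuous_image[OF Rm_cont Y[rule_format, of "-c"]] by simp
qed

lemma minus_ok:
  assumes "connected e" "inc_chain e \<or> dec_chain e"
  shows "monotone_set (offset_minus e \<delta>)"
  using assms(2)
proof
  assume "inc_chain e" then show ?thesis using core assms(1) by blast
next
  assume d: "dec_chain e"
  have "connected (Qm ` e)" using connected_continuous_image[OF Qm_cont assms(1)] .
  then have "monotone_set (offset_minus (Qm ` e) \<delta>)" using core Qm_inc[OF d] by blast
  then show ?thesis using Qm_mono Qm_offset by metis
qed

lemma both_ok: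
  assumes "connected e" "inc_chain e \<or> dec_chain e"
  shows "monotone_set (offset_minus e \<delta>) \<and> monotone_set (offset_plus e \<delta>)"
proof
  show "monotone_set (offset_minus e \<delta>)" using minus_ok assms by blast
  have "connected (Rm ` e)" using connected_continuous_image[OF Rm_cont assms(1)] .
  moreover have "inc_chain (Rm ` e) \<or> dec_chain (Rm ` e)" using assms(2) Rm_inc Rm_dec by blast
  ultimately have "monotone_set (offset_minus (Rm ` e) \<delta>)" using minus_ok by blast
  then show "monotone_set (offset_plus e \<delta>)" using Rm_mono Rm_offset by metis
qed



lemma betw3:
  fixes \<gamma> :: "real \<Rightarrow> pt" and g :: "pt \<Rightarrow> real"
  assumes cont: "continuous_on {0<..<1} \<gamma>" and inj: "inj_on \<gamma> {0<..<1}" and gc: "continuous_on UNIV g"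
    and sec: "\<And>c. connected (\<gamma> ` {0<..<1} \<inter> {p. g p = c})"
    and fin: "finite {c. infinite (\<gamma> ` {0<..<1} \<inter> {p. g p = c})}"
    and s: "0 < s1" "s1 < s2" "s2 < s3" "s3 < 1"
  shows "min (g (\<gamma> s1)) (g (\<gamma> s3)) \<le> g (\<gamma> s2) \<and> g (\<gamma> s2) \<le> max (g (\<gamma> s1)) (g (\<gamma> s3))"
proof -
  define f where "f = (\<lambda>s. g (\<gamma> s))"
  have fc: "continuous_on {0<..<1} f" unfolding f_def
    using continuous_on_compose2[OF gc cont] by auto
  have fc1: "continuous_on {s1..s2} f" using s by (intro continuous_on_subset[OF fc]) auto
  have fc2: "continuous_on {s2..s3} f" using s by (intro continuous_on_subset[OF fc]) auto
  have key: "c \<in> {c. infinite (\<gamma> ` {0<..<1} \<inter> {p. g p = c})}"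
    if u: "s1 \<le> u" "u \<le> s2" "f u = c" and v: "s2 \<le> v" "v \<le> s3" "f v = c" and c: "c \<noteq> f s2" for u v c
  proof -
    have "u \<noteq> v" using u v c by (metis order_antisym)
    moreover have uv01: "u \<in> {0<..<1}" "v \<in> {0<..<1}" using u v s by auto
    ultimately have ne: "\<gamma> u \<noteq> \<gamma> v" using inj_onD[OF inj] by blast
    have mem: "\<gamma> u \<in> \<gamma> ` {0<..<1} \<inter> {p. g p = c}" "\<gamma> v \<in> \<gamma> ` {0<..<1} \<inter> {p. g p = c}"
      using uv01 u v unfolding f_def by auto
    have "infinite (\<gamma> ` {0<..<1} \<inter> {p. g p = c})"
    proof
      assume "finite (\<gamma> ` {0<..<1} \<inter> {p. g p = c})"
      then have "\<gamma> ` {0<..<1} \<inter> {p. g p = c} = {} \<or> (\<exists>b. \<gamma> ` {0<..<1} \<inter> {p. g p = c} = {b})"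
        using connected_finite_iff_sing[OF sec[of c]] by blast
      then show False using mem ne by (metis empty_iff singletonD)
    qed
    then show ?thesis by simp
  qed
  show ?thesis
  proof (rule ccontr)
    assume "\<not> ?thesis"
    then have "f s2 < min (f s1) (f s3) \<or> f s2 > max (f s1) (f s3)" unfolding f_def by linarith
    then show False
    proof
      assume B: "f s2 < min (f s1) (f s3)"
      have "{f s2<..<min (f s1) (f s3)} \<subseteq> {c. infinite (\<gamma> ` {0<..<1} \<inter> {p. g p = c})}"
      proof
        fix c assume c: "c \<in> {f s2<..<min (f s1) (f s3)}"
        obtain u where u: "s1 \<le> u" "u \<le> s2" "f u = c"
          using IVT2'[where f=f and a=s1 and b=s2 and y=c] fc1 c s by auto
        obtain v where v: "s2 \<le> v" "v \<le> s3" "f v = c"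
          using IVT'[where f=f and a=s2 and b=s3 and y=c] fc2 c s by auto
        show "c \<in> {c. infinite (\<gamma> ` {0<..<1} \<inter> {p. g p = c})}"
          using key[OF u v] c by auto
      qed
      moreover have "infinite {f s2<..<min (f s1) (f s3)}" using B infinite_Ioo by blast
      ultimately show False using fin finite_subset by blast
    next
      assume A: "f s2 > max (f s1) (f s3)"
      have "{max (f s1) (f s3)<..<f s2} \<subseteq> {c. infinite (\<gamma> ` {0<..<1} \<inter> {p. g p = c})}"
      proof
        fix c assume c: "c \<in> {max (f s1) (f s3)<..<f s2}"
        obtain u where u: "s1 \<le> u" "u \<le> s2" "f u = c"
          using IVT'[where f=f and a=s1 and b=s2 and y=c] fc1 c s by auto
        obtain v where v: "s2 \<le> v" "v \<le> s3" "f v = c"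
          using IVT2'[where f=f and a=s2 and b=s3 and y=c] fc2 c s by auto
        show "c \<in> {c. infinite (\<gamma> ` {0<..<1} \<inter> {p. g p = c})}"
          using key[OF u v] c by auto
      qed
      moreover have "infinite {max (f s1) (f s3)<..<f s2}" using A infinite_Ioo by blast
      ultimately show False using fin finite_subset by blast
    qed
  qed
qed

lemma chain_helper:
  fixes \<gamma> :: "real \<Rightarrow> pt" and R :: "pt \<Rightarrow> pt \<Rightarrow> bool"
  assumes "\<And>u v. 0<u \<Longrightarrow> u \<le> v \<Longrightarrow> v<1 \<Longrightarrow> R (\<gamma> u) (\<gamma> v)"
  shows "\<forall>p\<in>\<gamma>`{0<..<1}. \<forall>q\<in>\<gamma>`{0<..<1}. R p q \<or> R q p"
proof (intro ballI)
  fix p q assume "p \<in> \<gamma>`{0<..<1}" "q \<in> \<gamma>`{0<..<1}"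
  then obtain u v where uv: "p = \<gamma> u" "q = \<gamma> v" "0<u" "u<1" "0<v" "v<1" by auto
  show "R p q \<or> R q p"
  proof (cases "u \<le> v")
    case True then show ?thesis using assms uv by auto
  next
    case False then show ?thesis using assms[of v u] uv by auto
  qed
qed

lemma chain_from_mono:
  fixes \<gamma> :: "real \<Rightarrow> pt"
  assumes e: "e = \<gamma> ` {0<..<1}"
    and X: "(\<forall>u v. 0<u \<and> u \<le> v \<and> v < 1 \<longrightarrow> fst (\<gamma> u) \<le> fst (\<gamma> v)) \<or> (\<forall>u v. 0<u \<and> u \<le> v \<and> v < 1 \<longrightarrow> fst (\<gamma> v) \<le> fst (\<gamma> u))"
    and Y: "(\<forall>u v. 0<u \<and> u \<le> v \<and> v < 1 \<longrightarrow> snd (\<gamma> u) \<le> snd (\<gamma> v)) \<or> (\<forall>u v. 0<u \<and> u \<le> v \<and> v < 1 \<longrightarrow> snd (\<gamma> v) \<le> snd (\<gamma> u))"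
  shows "inc_chain e \<or> dec_chain e"
  using X Y
proof (elim disjE)
  assume X1: "\<forall>u v. 0<u \<and> u \<le> v \<and> v < 1 \<longrightarrow> fst (\<gamma> u) \<le> fst (\<gamma> v)"
     and Y1: "\<forall>u v. 0<u \<and> u \<le> v \<and> v < 1 \<longrightarrow> snd (\<gamma> u) \<le> snd (\<gamma> v)"
  have "\<forall>p\<in>\<gamma>`{0<..<1}. \<forall>q\<in>\<gamma>`{0<..<1}. (\<lambda>p q. fst p \<le> fst q \<and> snd p \<le> snd q) p q \<or> (\<lambda>p q. fst p \<le> fst q \<and> snd p \<le> snd q) q p"
    by (rule chain_helper) (use X1 Y1 in auto)
  then show ?thesis unfolding inc_chain_def e by blast
next
  assume X1: "\<forall>u v. 0<u \<and> u \<le> v \<and> v < 1 \<longrightarrow> fst (\<gamma> u) \<le> fst (\<gamma> v)"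
     and Y1: "\<forall>u v. 0<u \<and> u \<le> v \<and> v < 1 \<longrightarrow> snd (\<gamma> v) \<le> snd (\<gamma> u)"
  have "\<forall>p\<in>\<gamma>`{0<..<1}. \<forall>q\<in>\<gamma>`{0<..<1}. (\<lambda>p q. fst p \<le> fst q \<and> snd q \<le> snd p) p q \<or> (\<lambda>p q. fst p \<le> fst q \<and> snd q \<le> snd p) q p"
    by (rule chain_helper) (use X1 Y1 in auto)
  then show ?thesis unfolding dec_chain_def e by blast
next
  assume X1: "\<forall>u v. 0<u \<and> u \<le> v \<and> v < 1 \<longrightarrow> fst (\<gamma> v) \<le> fst (\<gamma> u)"
     and Y1: "\<forall>u v. 0<u \<and> u \<le> v \<and> v < 1 \<longrightarrow> snd (\<gamma> u) \<le> snd (\<gamma> v)"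
  have "\<forall>p\<in>\<gamma>`{0<..<1}. \<forall>q\<in>\<gamma>`{0<..<1}. (\<lambda>p q. fst q \<le> fst p \<and> snd p \<le> snd q) p q \<or> (\<lambda>p q. fst q \<le> fst p \<and> snd p \<le> snd q) q p"
    by (rule chain_helper) (use X1 Y1 in auto)
  then show ?thesis unfolding dec_chain_def e by blast
next
  assume X1: "\<forall>u v. 0<u \<and> u \<le> v \<and> v < 1 \<longrightarrow> fst (\<gamma> v) \<le> fst (\<gamma> u)"
     and Y1: "\<forall>u v. 0<u \<and> u \<le> v \<and> v < 1 \<longrightarrow> snd (\<gamma> v) \<le> snd (\<gamma> u)"
  have "\<forall>p\<in>\<gamma>`{0<..<1}. \<forall>q\<in>\<gamma>`{0<..<1}. (\<lambda>p q. fst q \<le> fst p \<and> snd q \<le> snd p) p q \<or> (\<lambda>p q. fst q \<le> fst p \<and> snd q \<le> snd p) q p"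
    by (rule chain_helper) (use X1 Y1 in auto)
  then show ?thesis unfolding inc_chain_def e by blast
qed

theorem lemma9:
  fixes e :: "(real \<times> real) set" and \<delta> :: real
  assumes "is_curve e" and "\<delta> > 0"
  shows "monotone_set (offset_minus e \<delta>) \<and> monotone_set (offset_plus e \<delta>)"
proof -
  obtain \<gamma> :: "real \<Rightarrow> pt" and k t where
    cont: "continuous_on {0<..<1} \<gamma>" and inj: "inj_on \<gamma> {0<..<1}" and e: "e = \<gamma> ` {0<..<1}"
    and t: "t 0 = (0::real)" "t k = 1" "\<forall>i<k. t i < t (Suc i)"
    and alg: "\<forall>i<k. in_algebraic_curve (\<gamma> ` ({t i..t (Suc i)} \<inter> {0<..<1}))"
    using assms(1) unfolding is_curve_def pw_algebraic_open_arc_def by blast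
  have xm: "\<And>c. connected (e \<inter> {p. fst p = c})" using assms(1) unfolding is_curve_def x_monotone_def by blast
  have ym: "\<And>c. connected (e \<inter> {p. snd p = c})" using assms(1) unfolding is_curve_def y_monotone_def by blast
  have con: "connected e" unfolding e using connected_continuous_image[OF cont connected_Ioo] .
  have finx: "finite {c. infinite (e \<inter> {p. fst p = c})}"
    by (rule arc_fib[OF e t alg]) (rule fib_fst)
  have finy: "finite {c. infinite (e \<inter> {p. snd p = c})}"
    by (rule arc_fib[OF e t alg]) (rule fib_snd)
  have cf: "continuous_on UNIV (\<lambda>p::pt. fst p)" by (intro continuous_intros)
  have cs: "continuous_on UNIV (\<lambda>p::pt. snd p)" by (intro continuous_intros)
  have X: "(\<forall>u v. 0<u \<and> u \<le> v \<and> v < 1 \<longrightarrow> fst (\<gamma> u) \<le> fst (\<gamma> v)) \<or> (\<forall>u v. 0<u \<and> u \<le> v \<and> v < 1 \<longrightarrow> fst (\<gamma> v) \<le> fst (\<gamma> u))"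
    by (rule betw_mono[of "\<lambda>s. fst (\<gamma> s)"], rule betw3[OF cont inj cf])
      (use xm finx e in auto)
  have Y: "(\<forall>u v. 0<u \<and> u \<le> v \<and> v < 1 \<longrightarrow> snd (\<gamma> u) \<le> snd (\<gamma> v)) \<or> (\<forall>u v. 0<u \<and> u \<le> v \<and> v < 1 \<longrightarrow> snd (\<gamma> v) \<le> snd (\<gamma> u))"
    by (rule betw_mono[of "\<lambda>s. snd (\<gamma> s)"], rule betw3[OF cont inj cs])
      (use ym finy e in auto)
  have "inc_chain e \<or> dec_chain e" using chain_from_mono[OF e X Y] .
  then show ?thesis using both_ok con by blast
qed


end
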